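(* Let $a,b$ be nonnegative integers and let $G$ be a finite group. If for every minimal normal subgroup $M$ of $G$ the quotient $G/M$ is sub-$(a,b)$-valent, then for every nontrivial normal subgroup $N$ of $G$ the quotient $G/N$ is sub-$(a,b)$-valent.
   Context: An involution is an element of order $2$. A subset $S$ of a group $G$ is a Cayley set of $G$ if $1\notin S$, $S$ is inverse-closed, and $S$ generates $G$. On pairs of nonnegative integers define $(a',b')\preccurlyeq(a,b)$ if and only if $b'\le b$ and $a'\le a+(b-b')/2$. A Cayley set is sub-$(a,b)$-valent if it consists of $a'$ involutions and $b'$ non-involutions with $(a',b')\preccurlyeq(a,b)$. A group is sub-$(a,b)$-valent if it has a sub-$(a,b)$-valent Cayley set. *)

theory Defs
  imports "HOL-Algebra.Algebra"
begin

definition involution :: "('a, 'b) monoid_scheme \<Rightarrow> 'a \<Rightarrow> bool" where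
  "involution G x \<longleftrightarrow> x \<in> carrier G \<and> group.ord G x = 2"

definition cayley_set :: "('a, 'b) monoid_scheme \<Rightarrow> 'a set \<Rightarrow> bool" where
  "cayley_set G S \<longleftrightarrow> S \<subseteq> carrier G \<and> \<one>\<^bsub>G\<^esub> \<notin> S
     \<and> (\<forall>x\<in>S. inv\<^bsub>G\<^esub> x \<in> S) \<and> generate G S = carrier G"

definition valency_le :: "nat \<times> nat \<Rightarrow> nat \<times> nat \<Rightarrow> bool" where
  "valency_le p q \<longleftrightarrow> snd p \<le> snd q \<and>
     real (fst p) \<le> real (fst q) + (real (snd q) - real (snd p)) / 2"

definition sub_valent_set :: "('a, 'b) monoid_scheme \<Rightarrow> nat \<Rightarrow> nat \<Rightarrow> 'a set \<Rightarrow> bool" where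
  "sub_valent_set G a b S \<longleftrightarrow> cayley_set G S \<and> finite S \<and>
     valency_le (card {x\<in>S. involution G x}, card {x\<in>S. \<not> involution G x}) (a, b)"

definition sub_valent_group :: "('a, 'b) monoid_scheme \<Rightarrow> nat \<Rightarrow> nat \<Rightarrow> bool" where
  "sub_valent_group G a b \<longleftrightarrow> (\<exists>S. sub_valent_set G a b S)"

definition minimal_normal :: "'a set \<Rightarrow> ('a, 'b) monoid_scheme \<Rightarrow> bool" where
  "minimal_normal M G \<longleftrightarrow> M \<lhd> G \<and> M \<noteq> {\<one>\<^bsub>G\<^esub>} \<and>
     (\<forall>K. K \<lhd> G \<and> K \<subseteq> M \<and> K \<noteq> {\<one>\<^bsub>G\<^esub>} \<longrightarrow> K = M)"

end

theory Submission
  imports Defs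
begin


lemma involution_iff:
  fixes G (structure)
  assumes "group G"
  shows "involution G x \<longleftrightarrow> x \<in> carrier G \<and> x \<noteq> \<one>\<^bsub>G\<^esub> \<and> x \<otimes>\<^bsub>G\<^esub> x = \<one>\<^bsub>G\<^esub>"
proof -
  interpret group G by fact
  show ?thesis
  proof
    assume "involution G x"
    then have x: "x \<in> carrier G" "ord x = 2" unfolding involution_def by auto
    then have "x [^] (2::nat) = \<one>" using pow_eq_id by auto
    moreover have "x \<noteq> \<one>" using x ord_eq_1 by auto
    ultimately show "x \<in> carrier G \<and> x \<noteq> \<one> \<and> x \<otimes> x = \<one>" using x
      by (simp add: numeral_2_eq_2)
  next
    assume h: "x \<in> carrier G \<and> x \<noteq> \<one> \<and> x \<otimes> x = \<one>"
    then have "x [^] (2::nat) = \<one>" by (simp add: numeral_2_eq_2)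
    then have "ord x dvd 2" using pow_eq_id h by auto
    moreover have "ord x \<noteq> 1" using h ord_eq_1 by auto
    moreover have "ord x \<noteq> 0" using \<open>ord x dvd 2\<close> by (metis dvd_0_left_iff zero_neq_numeral)
    moreover have "ord x \<le> 2" using dvd_imp_le[of "ord x" 2] \<open>ord x dvd 2\<close> by simp
    ultimately have "ord x = 2" by linarith
    then show "involution G x" using h unfolding involution_def by auto
  qed
qed


lemma generate_minus_one:
  assumes "group H" "A \<subseteq> carrier H"
  shows "generate H (A - {\<one>\<^bsub>H\<^esub>}) = generate H A"
proof
  interpret group H by fact
  show "generate H (A - {\<one>\<^bsub>H\<^esub>}) \<subseteq> generate H A"
    by (rule mono_generate) auto
  have "A \<subseteq> generate H (A - {\<one>\<^bsub>H\<^esub>})"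
  proof
    fix x assume "x \<in> A"
    then show "x \<in> generate H (A - {\<one>\<^bsub>H\<^esub>})"
      by (cases "x = \<one>\<^bsub>H\<^esub>") (auto intro: generate.one generate.incl)
  qed
  then show "generate H A \<subseteq> generate H (A - {\<one>\<^bsub>H\<^esub>})"
    using generate_subgroup_incl[OF _ generate_is_subgroup] assms(2) by blast
qed

lemma hom_sub_valent:
  assumes hom: "group_hom G H h" and surj: "h ` carrier G = carrier H"
    and sv: "sub_valent_set G a b S"
  shows "sub_valent_set H a b (h ` S - {\<one>\<^bsub>H\<^esub>})"
proof -
  interpret group_hom G H h by fact
  define T where "T = h ` S - {\<one>\<^bsub>H\<^esub>}"
  have Sc: "S \<subseteq> carrier G" and S1: "\<one>\<^bsub>G\<^esub> \<notin> S" and Sinv: "\<And>x. x \<in> S \<Longrightarrow> inv\<^bsub>G\<^esub> x \<in> S"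
    and Sgen: "generate G S = carrier G" and fS: "finite S"
    and val: "valency_le (card {x\<in>S. involution G x}, card {x\<in>S. \<not> involution G x}) (a, b)"
    using sv unfolding sub_valent_set_def cayley_set_def by auto
  have iG: "\<And>x. involution G x \<longleftrightarrow> x \<in> carrier G \<and> x \<noteq> \<one>\<^bsub>G\<^esub> \<and> x \<otimes>\<^bsub>G\<^esub> x = \<one>\<^bsub>G\<^esub>"
    by (rule involution_iff) (rule G.group_axioms)
  have iH: "\<And>x. involution H x \<longleftrightarrow> x \<in> carrier H \<and> x \<noteq> \<one>\<^bsub>H\<^esub> \<and> x \<otimes>\<^bsub>H\<^esub> x = \<one>\<^bsub>H\<^esub>"
    by (rule involution_iff) (rule H.group_axioms)
  have Tc: "T \<subseteq> carrier H" using Sc unfolding T_def by auto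
  have fT: "finite T" using fS unfolding T_def by auto
  have Tinv: "\<forall>t\<in>T. inv\<^bsub>H\<^esub> t \<in> T"
  proof
    fix t assume "t \<in> T"
    then obtain x where x: "x \<in> S" "t = h x" "t \<noteq> \<one>\<^bsub>H\<^esub>" unfolding T_def by auto
    have "inv\<^bsub>H\<^esub> t = h (inv\<^bsub>G\<^esub> x)" using x Sc by auto
    moreover have "inv\<^bsub>H\<^esub> t \<noteq> \<one>\<^bsub>H\<^esub>" using x Sc by auto
    ultimately show "inv\<^bsub>H\<^esub> t \<in> T" unfolding T_def using Sinv x by auto
  qed
  have "generate H T = generate H (h ` S)"
    unfolding T_def proof (rule generate_minus_one[OF H.group_axioms])
    show "h ` S \<subseteq> carrier H" using Sc hom_closed by blast
  qed
  also have "\<dots> = h ` generate G S" using generate_img Sc by auto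
  finally have Tgen: "generate H T = carrier H" using Sgen surj by simp
  have cay: "cayley_set H T" unfolding cayley_set_def using Tc Tinv Tgen T_def by auto
  define Si where "Si = {x\<in>S. involution G x}"
  define Sn where "Sn = {x\<in>S. \<not> involution G x}"
  define Ti where "Ti = {x\<in>T. involution H x}"
  define Tn where "Tn = {x\<in>T. \<not> involution H x}"
  define Sn1 where "Sn1 = {x\<in>S. \<not> involution G x \<and> involution H (h x)}"
  define Sn2 where "Sn2 = {x\<in>S. \<not> involution G x \<and> h x \<noteq> \<one>\<^bsub>H\<^esub> \<and> \<not> involution H (h x)}"
  have A: "\<And>x. x \<in> S \<Longrightarrow> involution G x \<Longrightarrow> h x = \<one>\<^bsub>H\<^esub> \<or> involution H (h x)"
  proof -
    fix x assume x: "x \<in> S" "involution G x"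
    then have "h x \<otimes>\<^bsub>H\<^esub> h x = \<one>\<^bsub>H\<^esub>" using iG Sc by (metis hom_mult hom_one)
    then show "h x = \<one>\<^bsub>H\<^esub> \<or> involution H (h x)" using iH x Sc by auto
  qed
  have "Tn \<subseteq> h ` Sn2"
  proof
    fix t assume "t \<in> Tn"
    then obtain x where x: "x \<in> S" "t = h x" "t \<noteq> \<one>\<^bsub>H\<^esub>" "\<not> involution H t"
      unfolding Tn_def T_def by auto
    then have "\<not> involution G x" using A by blast
    then show "t \<in> h ` Sn2" using x unfolding Sn2_def by auto
  qed
  moreover have fSn2: "finite Sn2" using fS unfolding Sn2_def by auto
  ultimately have "card Tn \<le> card (h ` Sn2)" by (intro card_mono) auto
  also have "\<dots> \<le> card Sn2" using fSn2 by (rule card_image_le)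
  finally have c1: "card Tn \<le> card Sn2" .
  have "Ti \<subseteq> h ` Si \<union> h ` Sn1"
  proof
    fix t assume "t \<in> Ti"
    then obtain x where x: "x \<in> S" "t = h x" "involution H t"
      unfolding Ti_def T_def by auto
    then show "t \<in> h ` Si \<union> h ` Sn1" unfolding Si_def Sn1_def by auto
  qed
  then have "card Ti \<le> card (h ` Si \<union> h ` Sn1)"
    by (intro card_mono) (use fS in \<open>auto simp: Si_def Sn1_def\<close>)
  also have "\<dots> \<le> card (h ` Si) + card (h ` Sn1)" by (rule card_Un_le)
  also have "\<dots> \<le> card Si + card (h ` Sn1)"
    using card_image_le[of Si h] fS unfolding Si_def by auto
  finally have c2: "card Ti \<le> card Si + card (h ` Sn1)" .
  have fSn1: "finite Sn1" using fS unfolding Sn1_def by auto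
  have c3: "2 * card (h ` Sn1) \<le> card Sn1"
  proof -
    have "card Sn1 = (\<Sum>y\<in>h ` Sn1. card {x\<in>Sn1. h x = y})"
      using sum.image_gen[OF fSn1, of "\<lambda>_. (1::nat)" h] by simp
    moreover have "(\<Sum>y\<in>h ` Sn1. (2::nat)) \<le> (\<Sum>y\<in>h ` Sn1. card {x\<in>Sn1. h x = y})"
    proof (rule sum_mono)
      fix y assume "y \<in> h ` Sn1"
      then obtain x0 where x0: "x0 \<in> Sn1" "y = h x0" by auto
      have x0S: "x0 \<in> S" and x0c: "x0 \<in> carrier G" and ni: "\<not> involution G x0"
        and hi: "involution H (h x0)" using x0 Sc unfolding Sn1_def by auto
      have x01: "x0 \<noteq> \<one>\<^bsub>G\<^esub>" using x0S S1 by auto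
      have neq: "x0 \<noteq> inv\<^bsub>G\<^esub> x0"
      proof
        assume "x0 = inv\<^bsub>G\<^esub> x0"
        then have "x0 \<otimes>\<^bsub>G\<^esub> x0 = \<one>\<^bsub>G\<^esub>" using x0c by (metis G.r_inv)
        then show False using ni iG x0c x01 by auto
      qed
      have "\<not> involution G (inv\<^bsub>G\<^esub> x0)"
      proof
        assume "involution G (inv\<^bsub>G\<^esub> x0)"
        then have "inv\<^bsub>G\<^esub> x0 \<otimes>\<^bsub>G\<^esub> inv\<^bsub>G\<^esub> x0 = \<one>\<^bsub>G\<^esub>" using iG by auto
        then have "inv\<^bsub>G\<^esub> (x0 \<otimes>\<^bsub>G\<^esub> x0) = \<one>\<^bsub>G\<^esub>" using x0c by (simp add: G.inv_mult_group)
        then have "x0 \<otimes>\<^bsub>G\<^esub> x0 = \<one>\<^bsub>G\<^esub>" using x0c by (metis G.inv_eq_1_iff G.m_closed)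
        then show False using ni iG x0c x01 by auto
      qed
      moreover have "h (inv\<^bsub>G\<^esub> x0) = h x0"
      proof -
        have "h x0 \<otimes>\<^bsub>H\<^esub> h x0 = \<one>\<^bsub>H\<^esub>" using hi iH by auto
        then have "inv\<^bsub>H\<^esub> (h x0) = h x0" using x0c by (intro H.inv_equality) auto
        then show ?thesis using x0c by simp
      qed
      ultimately have "{x0, inv\<^bsub>G\<^esub> x0} \<subseteq> {x\<in>Sn1. h x = y}"
        using x0 Sinv[OF x0S] hi unfolding Sn1_def by auto
      then have "card {x0, inv\<^bsub>G\<^esub> x0} \<le> card {x\<in>Sn1. h x = y}"
        by (intro card_mono) (use fSn1 in auto)
      then show "2 \<le> card {x\<in>Sn1. h x = y}" using neq by simp
    qed
    ultimately show ?thesis by simp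
  qed
  have "Sn1 \<union> Sn2 \<subseteq> Sn" unfolding Sn1_def Sn2_def Sn_def by auto
  then have "card (Sn1 \<union> Sn2) \<le> card Sn" by (intro card_mono) (use fS in \<open>auto simp: Sn_def\<close>)
  moreover have "card (Sn1 \<union> Sn2) = card Sn1 + card Sn2"
    by (rule card_Un_disjoint) (use fS in \<open>auto simp: Sn1_def Sn2_def\<close>)
  ultimately have c4: "card Sn1 + card Sn2 \<le> card Sn" by simp
  have v: "card Sn \<le> b" "real (card Si) \<le> real a + (real b - real (card Sn)) / 2"
    using val unfolding valency_le_def Si_def Sn_def by auto
  have "card Tn \<le> b" using c1 c4 v by linarith
  moreover have "real (card Ti) \<le> real a + (real b - real (card Tn)) / 2"
  proof -
    have "real (card Ti) \<le> real (card Si) + real (card (h ` Sn1))" using c2 by linarith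
    moreover have "2 * real (card (h ` Sn1)) \<le> real (card Sn1)" using c3 by linarith
    moreover have "real (card Sn1) + real (card Tn) \<le> real (card Sn)" using c1 c4 by linarith
    ultimately show ?thesis using v by argo
  qed
  ultimately have "valency_le (card Ti, card Tn) (a, b)" unfolding valency_le_def by simp
  then show ?thesis unfolding sub_valent_set_def Ti_def Tn_def T_def[symmetric] using cay fT by simp
qed


lemma NM_mult:
  assumes "group G" "subgroup N G" "subgroup M G" "M \<subseteq> N"
  shows "N <#>\<^bsub>G\<^esub> M = N"
proof
  show "N <#>\<^bsub>G\<^esub> M \<subseteq> N" unfolding set_mult_def
    using assms subgroup.m_closed[OF assms(2)] by blast
  show "N \<subseteq> N <#>\<^bsub>G\<^esub> M"
  proof
    fix n assume n: "n \<in> N"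
    have "n = n \<otimes>\<^bsub>G\<^esub> \<one>\<^bsub>G\<^esub>" using n assms subgroup.subset[OF assms(2)]
      by (metis group.is_monoid monoid.r_one subsetD)
    moreover have "\<one>\<^bsub>G\<^esub> \<in> M" using assms(3) by (rule subgroup.one_closed)
    ultimately show "n \<in> N <#>\<^bsub>G\<^esub> M" unfolding set_mult_def using n by blast
  qed
qed

lemma quot_hom:
  fixes G (structure)
  assumes G: "group G" and N: "N \<lhd> G" and M: "M \<lhd> G" and MN: "M \<subseteq> N"
  shows "group_hom (G Mod M) (G Mod N) (\<lambda>C. N <#>\<^bsub>G\<^esub> C)
     \<and> (\<lambda>C. N <#>\<^bsub>G\<^esub> C) ` carrier (G Mod M) = carrier (G Mod N)"
proof -
  interpret group G by fact
  have sN: "subgroup N G" and sM: "subgroup M G" using N M normal_def by auto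
  have key: "\<And>g. g \<in> carrier G \<Longrightarrow> N <#> (M #> g) = N #> g"
    using setmult_rcos_assoc[of N M] NM_mult[OF G sN sM MN] subgroup.subset[OF sN] subgroup.subset[OF sM]
    by simp
  have gM: "group (G Mod M)" using M by (rule normal.factorgroup_is_group)
  have gN: "group (G Mod N)" using N by (rule normal.factorgroup_is_group)
  have hom: "(\<lambda>C. N <#> C) \<in> hom (G Mod M) (G Mod N)"
  proof (rule homI)
    fix C assume "C \<in> carrier (G Mod M)"
    then obtain g where g: "g \<in> carrier G" "C = M #> g" unfolding carrier_FactGroup by auto
    then show "N <#> C \<in> carrier (G Mod N)" using key unfolding carrier_FactGroup by auto
  next
    fix C D assume "C \<in> carrier (G Mod M)" "D \<in> carrier (G Mod M)"
    then obtain g k where g: "g \<in> carrier G" "C = M #> g" "k \<in> carrier G" "D = M #> k"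
      unfolding carrier_FactGroup by auto
    have "N <#> (C \<otimes>\<^bsub>G Mod M\<^esub> D) = N <#> (M #> (g \<otimes> k))"
      using g normal.rcos_sum[OF M] by simp
    also have "\<dots> = N #> (g \<otimes> k)" using g key by simp
    also have "\<dots> = (N #> g) <#> (N #> k)" using g normal.rcos_sum[OF N] by simp
    also have "\<dots> = (N <#> C) \<otimes>\<^bsub>G Mod N\<^esub> (N <#> D)" using g key by simp
    finally show "N <#> (C \<otimes>\<^bsub>G Mod M\<^esub> D) = (N <#> C) \<otimes>\<^bsub>G Mod N\<^esub> (N <#> D)" .
  qed
  have "group_hom (G Mod M) (G Mod N) (\<lambda>C. N <#> C)"
    unfolding group_hom_def group_hom_axioms_def using gM gN hom by blast
  moreover have "(\<lambda>C. N <#> C) ` carrier (G Mod M) = carrier (G Mod N)"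
    unfolding carrier_FactGroup image_image by (rule image_cong) (auto simp: key)
  ultimately show ?thesis by simp
qed

theorem lemma3p1:
  fixes G :: "('a, 'b) monoid_scheme" and a b :: nat
  assumes "group G" and "finite (carrier G)"
    and "\<And>M. minimal_normal M G \<Longrightarrow> sub_valent_group (G Mod M) a b"
  shows "\<forall>N. N \<lhd> G \<and> N \<noteq> {\<one>\<^bsub>G\<^esub>} \<longrightarrow> sub_valent_group (G Mod N) a b"
proof (intro allI impI)
  fix N assume NN: "N \<lhd> G \<and> N \<noteq> {\<one>\<^bsub>G\<^esub>}"
  define P where "P = (\<lambda>K. K \<lhd> G \<and> K \<subseteq> N \<and> K \<noteq> {\<one>\<^bsub>G\<^esub>})"
  have "P N" using NN unfolding P_def by auto
  then obtain M where PM: "P M" and Mmin: "\<And>K. P K \<Longrightarrow> card M \<le> card K"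
    using ex_has_least_nat[of P N card] by blast
  have "minimal_normal M G"
    unfolding minimal_normal_def
  proof (intro conjI allI impI)
    show "M \<lhd> G" "M \<noteq> {\<one>\<^bsub>G\<^esub>}" using PM unfolding P_def by auto
  next
    fix K assume K: "K \<lhd> G \<and> K \<subseteq> M \<and> K \<noteq> {\<one>\<^bsub>G\<^esub>}"
    then have "P K" using PM unfolding P_def by auto
    then have "card M \<le> card K" by (rule Mmin)
    moreover have "finite M" using PM assms(2) unfolding P_def
      by (meson finite_subset normal_imp_subgroup subgroup.subset)
    moreover have "card K \<le> card M" using K \<open>finite M\<close> by (intro card_mono) auto
    ultimately have "card K = card M" by linarith
    then show "K = M" using K \<open>finite M\<close> card_subset_eq by metis
  qed
  then obtain S where S: "sub_valent_set (G Mod M) a b S"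
    using assms(3) unfolding sub_valent_group_def by blast
  have h: "group_hom (G Mod M) (G Mod N) (\<lambda>C. N <#>\<^bsub>G\<^esub> C)
     \<and> (\<lambda>C. N <#>\<^bsub>G\<^esub> C) ` carrier (G Mod M) = carrier (G Mod N)"
    using quot_hom[OF assms(1)] NN PM unfolding P_def by auto
  show "sub_valent_group (G Mod N) a b"
    unfolding sub_valent_group_def using hom_sub_valent[OF _ _ S] h by blast
qed

end
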